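(* Fix $\lambda_s>0$, $\lambda>0$, $\alpha\in(1,2]$ and $c>0$, where in the case $\alpha=2$ we require $c<\frac12$. For each $n\ge 2$ let $\tilde n(n)$ be an integer with $0\le\tilde n(n)\le\min\{\binom n2, c\,n^\alpha\}$. Then there exist $C'>0$ and $N$ such that for all $n\ge N$ the average age $\Delta=\frac1n\sum_{i=1}^n\Delta_i$ of the greedy jammed network $G^{\mathrm{gr}}\big(n,\binom n2-\tilde n(n)\big)$ satisfies $\Delta\le C' n^{\alpha-1}$.
   Context: Version-age model. A gossip network on a finite node set $\mathcal N$ is specified by source rates $\lambda_{0j}>0$ and gossip rates $\lambda_{ij}\ge 0$ ($i\neq j$; rate at which $i$ sends to $j$); $\lambda_s>0$ is the source's update rate. For nonempty $S\subseteq\mathcal N$ let $N(S)=\{i\in\mathcal N\setminus S:\ \sum_{j\in S}\lambda_{ij}>0\}$ and define $$\Delta_S=\frac{\lambda_s+\sum_{i\in N(S)}\big(\sum_{j\in S}\lambda_{ij}\big)\Delta_{S\cup\{i\}}}{\sum_{j\in S}\lambda_{0j}+\sum_{i\in N(S)}\sum_{j\in S}\lambda_{ij}}$$ (well defined by downward induction on $|S|$); $\Delta_i=\Delta_{\{i\}}$. Networks with uniform link rate: node set $\{1,\dots,n\}$, $\lambda_{0j}=\lambda/n$ for all $j$, and a set of links (unordered pairs of distinct nodes); for each link $\{a,b\}$, $\lambda_{ab}=\lambda_{ba}=\lambda/n$, and $\lambda_{ab}=0$ otherwise. The fully connected network has all $\binom n2$ pairs as links; $\tilde n$ jammers remove $\tilde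 n$ distinct links, leaving $\bar n=\binom n2-\tilde n$ links. Greedy configuration $G^{\mathrm{gr}}(n,\bar n)$ for $0\le\bar n\le\binom n2$: write uniquely $\bar n=\binom k2+c$ with $1\le k\le n$ and $0\le c\le k-1$; the links are all pairs $\{a,b\}$ with $1\le a<b\le k$, together with (if $c>0$) the pairs $\{j,k+1\}$ for $1\le j\le c$; there are no other links. *)

theory Defs
  imports Complex_Main
begin

text \<open>Nodes are natural numbers; V is the finite node set, l0 j = lambda_{0j}
  (source rates), l i j = lambda_{ij} (gossip rates), ls = lambda_s.\<close>

definition nbrs :: "nat set \<Rightarrow> (nat \<Rightarrow> nat \<Rightarrow> real) \<Rightarrow> nat set \<Rightarrow> nat set" where
  "nbrs V l S = {i \<in> V - S. (\<Sum>j\<in>S. l i j) > 0}"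

text \<open>Downward recursion on |S| realised with a fuel parameter k = |V| - |S|.
  When k = 0 (S = V) the neighbour set is empty, so the formula is the defining one.\<close>

fun age_aux :: "nat set \<Rightarrow> (nat \<Rightarrow> real) \<Rightarrow> (nat \<Rightarrow> nat \<Rightarrow> real) \<Rightarrow> real \<Rightarrow> nat \<Rightarrow> nat set \<Rightarrow> real" where
  "age_aux V l0 l ls 0 S =
     ls / ((\<Sum>j\<in>S. l0 j) + (\<Sum>i\<in>nbrs V l S. \<Sum>j\<in>S. l i j))"
| "age_aux V l0 l ls (Suc k) S =
     (ls + (\<Sum>i\<in>nbrs V l S. (\<Sum>j\<in>S. l i j) * age_aux V l0 l ls k (insert i S)))
     / ((\<Sum>j\<in>S. l0 j) + (\<Sum>i\<in>nbrs V l S. \<Sum>j\<in>S. l i j))"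

definition age_set :: "nat set \<Rightarrow> (nat \<Rightarrow> real) \<Rightarrow> (nat \<Rightarrow> nat \<Rightarrow> real) \<Rightarrow> real \<Rightarrow> nat set \<Rightarrow> real" where
  "age_set V l0 l ls S = age_aux V l0 l ls (card V - card S) S"

text \<open>link is a symmetric predicate giving the links (unordered pairs).\<close>

definition unif_l0 :: "nat \<Rightarrow> real \<Rightarrow> nat \<Rightarrow> real" where
  "unif_l0 n lam j = lam / real n"

definition unif_l :: "nat \<Rightarrow> real \<Rightarrow> (nat \<Rightarrow> nat \<Rightarrow> bool) \<Rightarrow> nat \<Rightarrow> nat \<Rightarrow> real" where
  "unif_l n lam link a b = (if link a b then lam / real n else 0)"

definition avg_age :: "nat \<Rightarrow> real \<Rightarrow> real \<Rightarrow> (nat \<Rightarrow> nat \<Rightarrow> bool) \<Rightarrow> real" where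
  "avg_age n lam ls link =
     (1 / real n) * (\<Sum>i\<in>{1..n}. age_set {1..n} (unif_l0 n lam) (unif_l n lam link) ls {i})"

text \<open>nb = (k choose 2) + c with 1 \<le> k \<le> n and 0 \<le> c \<le> k - 1 (unique for nb \<le> n choose 2).\<close>

definition gr_k :: "nat \<Rightarrow> nat \<Rightarrow> nat" where
  "gr_k n nb = (THE k. 1 \<le> k \<and> k \<le> n \<and> k choose 2 \<le> nb \<and> nb - (k choose 2) \<le> k - 1)"

definition gr_c :: "nat \<Rightarrow> nat \<Rightarrow> nat" where
  "gr_c n nb = nb - (gr_k n nb choose 2)"

definition gr_edge :: "nat \<Rightarrow> nat \<Rightarrow> nat \<Rightarrow> nat \<Rightarrow> bool" where
  "gr_edge n nb a b \<longleftrightarrow>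
     (1 \<le> a \<and> a < b \<and> b \<le> gr_k n nb) \<or>
     (gr_c n nb > 0 \<and> 1 \<le> a \<and> a \<le> gr_c n nb \<and> b = gr_k n nb + 1)"

definition gr_link :: "nat \<Rightarrow> nat \<Rightarrow> nat \<Rightarrow> nat \<Rightarrow> bool" where
  "gr_link n nb a b \<longleftrightarrow> gr_edge n nb a b \<or> gr_edge n nb b a"

end

theory Submission
  imports Defs
begin

lemma age_set_rec:
  assumes "finite V" "S \<subseteq> V"
  shows "age_set V l0 l ls S =
     (ls + (\<Sum>i\<in>nbrs V l S. (\<Sum>j\<in>S. l i j) * age_set V l0 l ls (insert i S)))
     / ((\<Sum>j\<in>S. l0 j) + (\<Sum>i\<in>nbrs V l S. \<Sum>j\<in>S. l i j))"
proof (cases "card V - card S")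
  case 0
  then have "card V \<le> card S" by simp
  with assms have "S = V" using card_subset_eq card_mono by (metis le_antisym)
  then have "nbrs V l S = {}" by (auto simp: nbrs_def)
  then show ?thesis using 0 by (simp add: age_set_def)
next
  case (Suc k)
  have "age_set V l0 l ls (insert i S) = age_aux V l0 l ls k (insert i S)" if "i \<in> nbrs V l S" for i
  proof -
    have "i \<in> V" "i \<notin> S" using that by (auto simp: nbrs_def)
    then have "card (insert i S) = Suc (card S)" using assms finite_subset[OF assms(2) assms(1)] by auto
    moreover have "card V - Suc (card S) = k" using Suc by simp
    ultimately show ?thesis by (simp add: age_set_def)
  qed
  then show ?thesis using Suc by (simp add: age_set_def)
qed

lemma age_bound:
  fixes P :: "nat set \<Rightarrow> bool" and B :: "nat set \<Rightarrow> real"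
  assumes fin: "finite V"
    and closed: "\<And>S i. P S \<Longrightarrow> S \<subseteq> V \<Longrightarrow> i \<in> nbrs V l S \<Longrightarrow> P (insert i S)"
    and wpos: "\<And>i j. l i j \<ge> 0"
    and step: "\<And>S. P S \<Longrightarrow> S \<subseteq> V \<Longrightarrow>
       ls + (\<Sum>i\<in>nbrs V l S. (\<Sum>j\<in>S. l i j) * B (insert i S))
       \<le> ((\<Sum>j\<in>S. l0 j) + (\<Sum>i\<in>nbrs V l S. \<Sum>j\<in>S. l i j)) * B S"
    and dpos: "\<And>S. P S \<Longrightarrow> S \<subseteq> V \<Longrightarrow> (\<Sum>j\<in>S. l0 j) + (\<Sum>i\<in>nbrs V l S. \<Sum>j\<in>S. l i j) > 0"
  shows "P S \<Longrightarrow> S \<subseteq> V \<Longrightarrow> age_set V l0 l ls S \<le> B S"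
proof (induction "card V - card S" arbitrary: S rule: less_induct)
  case less
  define D where "D = (\<Sum>j\<in>S. l0 j) + (\<Sum>i\<in>nbrs V l S. \<Sum>j\<in>S. l i j)"
  have D: "D > 0" using dpos less.prems D_def by blast
  have IH: "age_set V l0 l ls (insert i S) \<le> B (insert i S)" if "i \<in> nbrs V l S" for i
  proof -
    have "i \<in> V" "i \<notin> S" using that by (auto simp: nbrs_def)
    then have "card (insert i S) = Suc (card S)" using finite_subset[OF less.prems(2) fin] by auto
    moreover have "card S < card V" using \<open>i \<in> V\<close> \<open>i \<notin> S\<close> less.prems fin
      by (metis psubsetI psubset_card_mono)
    ultimately have "card V - card (insert i S) < card V - card S" by simp
    then show ?thesis using less.hyps closed less.prems that \<open>i \<in> V\<close> by blast
  qed
  have "age_set V l0 l ls S = (ls + (\<Sum>i\<in>nbrs V l S. (\<Sum>j\<in>S. l i j) * age_set V l0 l ls (insert i S))) / D"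
    using age_set_rec[OF fin less.prems(2)] D_def by simp
  also have "\<dots> \<le> (ls + (\<Sum>i\<in>nbrs V l S. (\<Sum>j\<in>S. l i j) * B (insert i S))) / D"
    using D IH by (intro divide_right_mono add_left_mono sum_mono mult_left_mono) (auto intro: sum_nonneg wpos)
  also have "\<dots> \<le> B S" using step[OF less.prems] D D_def by (simp add: divide_le_eq mult.commute)
  finally show ?case .
qed

lemma unif_l_nonneg: "lam > 0 \<Longrightarrow> unif_l n lam link i j \<ge> 0"
  by (simp add: unif_l_def)

lemma sum_l0: "(\<Sum>j\<in>S. unif_l0 n lam j) = real (card S) * lam / real n"
  by (simp add: unif_l0_def)

lemma W_nonneg: "lam > 0 \<Longrightarrow> (\<Sum>i\<in>A. \<Sum>j\<in>S. unif_l n lam link i j) \<ge> 0"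
  by (intro sum_nonneg) (simp add: unif_l_def)

lemma dpos_unif:
  assumes "n > 0" "lam > 0" "S \<noteq> {}" "S \<subseteq> {1..n}"
  shows "(\<Sum>j\<in>S. unif_l0 n lam j) + (\<Sum>i\<in>A. \<Sum>j\<in>S. unif_l n lam link i j) > 0"
proof -
  have "finite S" using assms(4) finite_subset by blast
  then have "card S > 0" using assms(3) by auto
  then have "(\<Sum>j\<in>S. unif_l0 n lam j) > 0" using assms by (simp add: sum_l0)
  then show ?thesis using W_nonneg[OF assms(2), where A=A and n=n and link=link and S=S] by linarith
qed

lemma triv_bound:
  assumes "n > 0" "lam > 0" "ls > 0" "i \<in> {1..n}"
  shows "age_set {1..n} (unif_l0 n lam) (unif_l n lam link) ls {i} \<le> real n * ls / lam"
proof -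
  let ?l = "unif_l n lam link"
  have "age_set {1..n} (unif_l0 n lam) ?l ls S \<le> real n * ls / lam" if "S \<noteq> {}" "S \<subseteq> {1..n}" for S
  proof (rule age_bound[where P = "\<lambda>S. S \<noteq> {}" and B = "\<lambda>_. real n * ls / lam", OF _ _ _ _ _ that])
    show "0 \<le> ?l i j" for i j using assms by (simp add: unif_l_nonneg)
    show "0 < (\<Sum>j\<in>S. unif_l0 n lam j) + (\<Sum>i\<in>nbrs {1..n} ?l S. \<Sum>j\<in>S. ?l i j)"
      if "S \<noteq> {}" "S \<subseteq> {1..n}" for S using dpos_unif assms that by blast
    show "ls + (\<Sum>i\<in>nbrs {1..n} ?l S. (\<Sum>j\<in>S. ?l i j) * (real n * ls / lam))
       \<le> ((\<Sum>j\<in>S. unif_l0 n lam j) + (\<Sum>i\<in>nbrs {1..n} ?l S. \<Sum>j\<in>S. ?l i j)) * (real n * ls / lam)"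
      if "S \<noteq> {}" "S \<subseteq> {1..n}" for S
    proof -
      have "finite S" using that(2) finite_subset by blast
      then have "card S \<ge> 1" using that(1) by (simp add: Suc_leI card_gt_0_iff)
      then have "ls \<le> real (card S) * lam / real n * (real n * ls / lam)"
        using assms by (simp add: field_simps)
      moreover have "(\<Sum>i\<in>nbrs {1..n} ?l S. (\<Sum>j\<in>S. ?l i j) * (real n * ls / lam))
          = (\<Sum>i\<in>nbrs {1..n} ?l S. \<Sum>j\<in>S. ?l i j) * (real n * ls / lam)"
        by (rule sum_distrib_right[symmetric])
      ultimately show ?thesis unfolding sum_l0 distrib_right by linarith
    qed
  qed auto
  then show ?thesis using assms(4) by auto
qed

definition uu :: "nat \<Rightarrow> nat \<Rightarrow> real" where
  "uu k t = (\<Sum>j=t..k. 1 / real j)"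

definition gg :: "nat \<Rightarrow> nat \<Rightarrow> real" where
  "gg k t = uu k t / (real k - real t + 1)"

lemma uu_step: "t \<le> k \<Longrightarrow> uu k t = 1 / real t + uu k (Suc t)"
  unfolding uu_def by (simp add: sum.atLeast_Suc_atMost)

lemma uu_nonneg: "uu k t \<ge> 0"
  unfolding uu_def by (intro sum_nonneg) auto

lemma uu_le: assumes "1 \<le> t" "t \<le> k" shows "uu k (Suc t) \<le> (real k - real t) / real t"
proof -
  have "uu k (Suc t) \<le> real (card {Suc t..k}) * (1 / real t)"
    unfolding uu_def using assms by (intro sum_bounded_above) (auto simp: frac_le)
  also have "\<dots> = (real k - real t) / real t" using assms by (simp add: of_nat_diff)
  finally show ?thesis .
qed

lemma gg_nonneg: "t \<le> k \<Longrightarrow> gg k t \<ge> 0"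
  unfolding gg_def using uu_nonneg by simp

lemma gg_mono: assumes "1 \<le> t" "t < k" shows "gg k (Suc t) \<le> gg k t"
proof -
  have u: "uu k t = 1 / real t + uu k (Suc t)" using assms uu_step by simp
  have b: "uu k (Suc t) \<le> (real k - real t) / real t" using assms uu_le by simp
  have kt: "real k - real t > 0" using assms by simp
  have "uu k (Suc t) * (real k - real t + 1) \<le> (real k - real t) * (1 / real t + uu k (Suc t))"
  proof -
    have "uu k (Suc t) \<le> (real k - real t) * (1 / real t)" using b by simp
    then show ?thesis by (simp add: algebra_simps)
  qed
  then show ?thesis unfolding gg_def u using assms kt
    by (simp add: divide_simps of_nat_diff) (simp add: algebra_simps)
qed

lemma gg_id: assumes "1 \<le> t" "t \<le> k"
  shows "real t * ((real k - real t + 1) * gg k t - (real k - real t) * gg k (Suc t)) = 1"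
proof -
  have a: "(real k - real t + 1) * gg k t = uu k t" unfolding gg_def using assms by simp
  have b: "(real k - real t) * gg k (Suc t) = uu k (Suc t)"
  proof (cases "t = k")
    case True then show ?thesis by (simp add: uu_def)
  next
    case False then have "real k - real (Suc t) + 1 = real k - real t" "real k - real t \<noteq> 0" using assms by auto
    then show ?thesis unfolding gg_def by simp
  qed
  show ?thesis unfolding a b using uu_step[OF assms(2)] assms by simp
qed

lemma uu1_le: "1 \<le> k \<Longrightarrow> uu k 1 \<le> 1 + ln (real k)"
proof (induction k rule: dec_induct)
  case base then show ?case by (simp add: uu_def)
next
  case (step m)
  have "uu (Suc m) 1 = uu m 1 + 1 / real (Suc m)" unfolding uu_def by simp
  moreover have "1 / real (Suc m) \<le> ln (real (Suc m)) - ln (real m)"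
  proof -
    have "ln (real m / real (Suc m)) \<le> real m / real (Suc m) - 1" using step by (intro ln_le_minus_one) auto
    moreover have "real m / real (Suc m) - 1 = - (1 / real (Suc m))" by (simp add: field_simps)
    moreover have "ln (real m / real (Suc m)) = ln (real m) - ln (real (Suc m))" using step by (simp add: ln_div)
    ultimately show ?thesis by linarith
  qed
  ultimately show ?case using step by linarith
qed

lemma clique_bound:
  assumes n: "n > 0" and lam: "lam > 0" and ls: "ls > 0" and k: "1 \<le> k" "k \<le> n"
    and cl: "\<And>a b. a \<in> {1..k} \<Longrightarrow> b \<in> {1..k} \<Longrightarrow> a \<noteq> b \<Longrightarrow> link a b"
    and i: "i \<in> {1..k}"
  shows "age_set {1..n} (unif_l0 n lam) (unif_l n lam link) ls {i} \<le> real n * ls / lam * gg k 1"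
proof -
  let ?l = "unif_l n lam link"
  let ?K = "{1..k}"
  let ?B = "\<lambda>S. real n * ls / lam * gg k (card (S \<inter> ?K))"
  have main: "age_set {1..n} (unif_l0 n lam) ?l ls S \<le> ?B S" if "S \<inter> ?K \<noteq> {}" "S \<subseteq> {1..n}" for S
  proof (rule age_bound[where P = "\<lambda>S. S \<inter> ?K \<noteq> {}" and B = ?B, OF _ _ _ _ _ that])
    show "0 \<le> ?l i j" for i j using lam by (simp add: unif_l_nonneg)
    show "0 < (\<Sum>j\<in>S. unif_l0 n lam j) + (\<Sum>i\<in>nbrs {1..n} ?l S. \<Sum>j\<in>S. ?l i j)"
      if "S \<inter> ?K \<noteq> {}" "S \<subseteq> {1..n}" for S using dpos_unif n lam that by blast
    show "ls + (\<Sum>i\<in>nbrs {1..n} ?l S. (\<Sum>j\<in>S. ?l i j) * ?B (insert i S))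
       \<le> ((\<Sum>j\<in>S. unif_l0 n lam j) + (\<Sum>i\<in>nbrs {1..n} ?l S. \<Sum>j\<in>S. ?l i j)) * ?B S"
      if SK: "S \<inter> ?K \<noteq> {}" and SV: "S \<subseteq> {1..n}" for S
    proof -
      define N where "N = nbrs {1..n} ?l S"
      define w where "w i = (\<Sum>j\<in>S. ?l i j)" for i
      define t where "t = card (S \<inter> ?K)"
      define H0 where "H0 = real n * ls / lam * gg k t"
      define H1 where "H1 = real n * ls / lam * gg k (Suc t)"
      have finS: "finite S" using SV finite_subset by blast
      have t1: "1 \<le> t" using SK t_def by (simp add: Suc_leI card_gt_0_iff)
      have tk: "t \<le> k" 
      proof -
        have "card (S \<inter> ?K) \<le> card ?K" by (intro card_mono) auto
        then show ?thesis unfolding t_def by simp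
      qed
      have tS: "t \<le> card S" unfolding t_def using finS by (simp add: card_mono)
      have finN: "finite N" unfolding N_def nbrs_def by simp
      have wge: "w i \<ge> real t * lam / real n" if "i \<in> ?K - S" for i
      proof -
        have "(\<Sum>j\<in>S \<inter> ?K. ?l i j) = (\<Sum>j\<in>S \<inter> ?K. lam / real n)"
          using that cl by (intro sum.cong) (auto simp: unif_l_def)
        also have "\<dots> = real t * lam / real n" unfolding t_def by simp
        finally have "(\<Sum>j\<in>S \<inter> ?K. ?l i j) = real t * lam / real n" .
        moreover have "(\<Sum>j\<in>S \<inter> ?K. ?l i j) \<le> w i" unfolding w_def
          using finS lam by (intro sum_mono2) (auto simp: unif_l_def)
        ultimately show ?thesis by simp
      qed
      have NK: "N \<inter> ?K = ?K - S"
      proof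
        show "N \<inter> ?K \<subseteq> ?K - S" unfolding N_def nbrs_def by auto
        show "?K - S \<subseteq> N \<inter> ?K"
        proof
          fix i assume iK: "i \<in> ?K - S"
          have "0 < real t * lam / real n" using t1 lam n by simp
          also have "\<dots> \<le> w i" using wge iK by blast
          finally show "i \<in> N \<inter> ?K" using iK k unfolding N_def nbrs_def w_def by auto
        qed
      qed
      have cardKS: "card (?K - S) = k - t"
      proof -
        have "?K - S = ?K - (S \<inter> ?K)" by auto
        then show ?thesis unfolding t_def by (simp add: card_Diff_subset)
      qed
      have B1: "?B (insert i S) = H1" if "i \<in> N \<inter> ?K" for i
      proof -
        have "i \<notin> S" using that unfolding N_def nbrs_def by auto
        then have "insert i S \<inter> ?K = insert i (S \<inter> ?K)" using that by auto
        then have "card (insert i S \<inter> ?K) = Suc t" using \<open>i \<notin> S\<close> finS unfolding t_def by simp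
        then show ?thesis unfolding H1_def by simp
      qed
      have B0: "?B (insert i S) = H0" if "i \<in> N - ?K" for i
      proof -
        have "insert i S \<inter> ?K = S \<inter> ?K" using that by auto
        then show ?thesis unfolding H0_def t_def by simp
      qed
      have L: "(\<Sum>i\<in>N. w i * ?B (insert i S)) = (\<Sum>i\<in>?K - S. w i) * H1 + (\<Sum>i\<in>N - ?K. w i) * H0"
      proof -
        have "(\<Sum>i\<in>N. w i * ?B (insert i S)) = (\<Sum>i\<in>N \<inter> ?K. w i * ?B (insert i S)) + (\<Sum>i\<in>N - ?K. w i * ?B (insert i S))"
          using finN by (rule sum.Int_Diff)
        also have "\<dots> = (\<Sum>i\<in>N \<inter> ?K. w i * H1) + (\<Sum>i\<in>N - ?K. w i * H0)"
          using B0 B1 by simp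
        finally show ?thesis unfolding NK by (simp add: sum_distrib_right)
      qed
      have R: "(\<Sum>i\<in>N. w i) = (\<Sum>i\<in>?K - S. w i) + (\<Sum>i\<in>N - ?K. w i)"
        using sum.Int_Diff[OF finN, of w ?K] unfolding NK .
      have mono: "(\<Sum>i\<in>?K - S. real t * lam / real n * (H0 - H1)) \<le> (\<Sum>i\<in>?K - S. w i * (H0 - H1))"
      proof (rule sum_mono)
        fix i assume iKS: "i \<in> ?K - S"
        have "t < k"
        proof -
          have "S \<inter> ?K \<subset> ?K" using iKS by blast
          then have "card (S \<inter> ?K) < card ?K" by (rule psubset_card_mono[OF finite_atLeastAtMost])
          then show ?thesis unfolding t_def by simp
        qed
        then have "gg k (Suc t) \<le> gg k t" using gg_mono t1 by blast
        moreover have "real n * ls / lam \<ge> 0" using n ls lam by simp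
        ultimately have "H1 \<le> H0" unfolding H0_def H1_def by (rule mult_left_mono)
        then have "H0 - H1 \<ge> 0" by simp
        then show "real t * lam / real n * (H0 - H1) \<le> w i * (H0 - H1)"
          using wge[OF iKS] by (rule mult_right_mono[rotated])
      qed
      have eq: "real t * lam / real n * H0 + real (k - t) * (real t * lam / real n * (H0 - H1)) = ls"
      proof -
        define a where "a = real t * lam / real n"
        define X where "X = real n * ls / lam"
        define rk where "rk = real k - real t"
        have aX: "a * X = real t * ls" unfolding a_def X_def using n lam by simp
        have rk: "real (k - t) = rk" unfolding rk_def using tk by (simp add: of_nat_diff)
        have g: "real t * ((rk + 1) * gg k t - rk * gg k (Suc t)) = 1" using gg_id[OF t1 tk] unfolding rk_def by simp
        have "a * H0 + real (k - t) * (a * (H0 - H1)) = (a * X) * (gg k t + rk * (gg k t - gg k (Suc t)))"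
          unfolding H0_def H1_def X_def[symmetric] rk by (simp add: algebra_simps)
        also have "\<dots> = ls * (real t * ((rk + 1) * gg k t - rk * gg k (Suc t)))"
          unfolding aX by (simp add: algebra_simps)
        also have "\<dots> = ls" using g by simp
        finally show ?thesis unfolding a_def .
      qed
      have H0nn: "H0 \<ge> 0" unfolding H0_def using gg_nonneg[OF tk] n ls lam by simp
      have cS: "real (card S) * lam / real n * H0 \<ge> real t * lam / real n * H0"
        using tS H0nn lam n by (intro mult_right_mono divide_right_mono mult_right_mono) auto
      have "(\<Sum>i\<in>?K - S. w i * (H0 - H1)) = (\<Sum>i\<in>?K - S. w i) * H0 - (\<Sum>i\<in>?K - S. w i) * H1"
        by (simp add: sum_distrib_right right_diff_distrib sum_subtractf)
      moreover have "(\<Sum>i\<in>?K - S. real t * lam / real n * (H0 - H1)) = real (k - t) * (real t * lam / real n * (H0 - H1))"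
        using cardKS by simp
      ultimately have fin: "ls + (\<Sum>i\<in>?K - S. w i) * H1 + (\<Sum>i\<in>N - ?K. w i) * H0
          \<le> (real (card S) * lam / real n + (\<Sum>i\<in>?K - S. w i) + (\<Sum>i\<in>N - ?K. w i)) * H0"
        using mono eq cS unfolding distrib_right by linarith
      show ?thesis using fin L R unfolding N_def[symmetric] w_def[symmetric] sum_l0 H0_def t_def
        by (simp add: add.assoc)
    qed
  qed auto
  have "{i} \<inter> ?K = {i}" "{i} \<subseteq> {1..n}" using i k by auto
  then have "age_set {1..n} (unif_l0 n lam) ?l ls {i} \<le> ?B {i}" using main[of "{i}"] by auto
  also have "?B {i} = real n * ls / lam * gg k 1" using \<open>{i} \<inter> ?K = {i}\<close> by simp
  finally show ?thesis .
qed



lemma choose_Suc2: "Suc k choose 2 = (k choose 2) + k"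
  by (simp add: numeral_2_eq_2)

lemma choose2_mono: assumes "k1 < k2" shows "(k1 choose 2) + k1 \<le> (k2 choose 2)"
proof -
  have "Suc k1 \<le> k2" using assms by simp
  then show ?thesis
  proof (induction k2 rule: dec_induct)
    case base then show ?case by (simp add: choose_Suc2)
  next
    case (step m) then show ?case by (simp add: choose_Suc2)
  qed
qed

lemma two_choose: "2 * (n choose 2) = n * (n - 1)"
proof (induction n)
  case 0 then show ?case by simp
next
  case (Suc n) then show ?case by (cases n) (simp_all add: choose_Suc2 algebra_simps)
qed

lemma gr_k_props:
  assumes "1 \<le> n" "nb \<le> n choose 2"
  shows "1 \<le> gr_k n nb \<and> gr_k n nb \<le> n \<and> gr_k n nb choose 2 \<le> nb \<and> nb - (gr_k n nb choose 2) \<le> gr_k n nb - 1"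
proof -
  define Q where "Q k \<longleftrightarrow> 1 \<le> k \<and> k \<le> n \<and> k choose 2 \<le> nb \<and> nb - (k choose 2) \<le> k - 1" for k
  define A where "A = {k\<in>{1..n}. k choose 2 \<le> nb}"
  have finA: "finite A" unfolding A_def by simp
  have "1 \<in> A" unfolding A_def using assms by (simp add: numeral_2_eq_2)
  define k0 where "k0 = Max A"
  have k0A: "k0 \<in> A" unfolding k0_def using finA \<open>1 \<in> A\<close> by (intro Max_in) auto
  have k0max: "k \<le> k0" if "k \<in> A" for k unfolding k0_def using finA that by simp
  have Qk0: "Q k0"
  proof (cases "k0 = n")
    case True then show ?thesis using k0A assms unfolding Q_def A_def by auto
  next
    case False
    then have "Suc k0 \<notin> A" using k0max by fastforce
    moreover have "Suc k0 \<in> {1..n}" using False k0A unfolding A_def by auto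
    ultimately have "nb < Suc k0 choose 2" unfolding A_def by auto
    then show ?thesis using k0A unfolding Q_def A_def by (auto simp: choose_Suc2)
  qed
  have uniq: "k = k0" if "Q k" for k
  proof (rule ccontr)
    assume "k \<noteq> k0"
    then consider "k < k0" | "k0 < k" by linarith
    then show False
    proof cases
      case 1 then have "(k choose 2) + k \<le> k0 choose 2" by (rule choose2_mono)
      then show False using that Qk0 unfolding Q_def by linarith
    next
      case 2 then have "(k0 choose 2) + k0 \<le> k choose 2" by (rule choose2_mono)
      then show False using that Qk0 unfolding Q_def by linarith
    qed
  qed
  have "gr_k n nb = k0" unfolding gr_k_def
  proof (rule the_equality)
    show "1 \<le> k0 \<and> k0 \<le> n \<and> k0 choose 2 \<le> nb \<and> nb - (k0 choose 2) \<le> k0 - 1" using Qk0 unfolding Q_def .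
    show "k = k0" if "1 \<le> k \<and> k \<le> n \<and> k choose 2 \<le> nb \<and> nb - (k choose 2) \<le> k - 1" for k
      using uniq[of k] that unfolding Q_def by blast
  qed
  then show ?thesis using Qk0 unfolding Q_def by (simp only:)
qed

lemma gr_clique:
  assumes "a \<in> {1..gr_k n nb}" "b \<in> {1..gr_k n nb}" "a \<noteq> b"
  shows "gr_link n nb a b"
proof (cases "a < b")
  case True
  then have "1 \<le> a \<and> a < b \<and> b \<le> gr_k n nb" using assms by simp
  then show ?thesis unfolding gr_link_def gr_edge_def by blast
next
  case False
  then have "1 \<le> b \<and> b < a \<and> a \<le> gr_k n nb" using assms by simp
  then show ?thesis unfolding gr_link_def gr_edge_def by blast
qed

lemma avg_split:
  fixes A :: "nat \<Rightarrow> real"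
  assumes "n > 0" "k \<le> n" "\<And>i. i \<in> {1..k} \<Longrightarrow> A i \<le> X" "\<And>i. i \<in> {Suc k..n} \<Longrightarrow> A i \<le> Y"
  shows "(1 / real n) * (\<Sum>i\<in>{1..n}. A i) \<le> (1 / real n) * (real k * X + (real n - real k) * Y)"
proof -
  have U: "{1..n} = {1..k} \<union> {Suc k..n}" using assms(2) by auto
  have "(\<Sum>i\<in>{1..n}. A i) = (\<Sum>i\<in>{1..k}. A i) + (\<Sum>i\<in>{Suc k..n}. A i)"
    unfolding U by (rule sum.union_disjoint) auto
  also have "\<dots> \<le> real (card {1..k}) * X + real (card {Suc k..n}) * Y"
    using assms(3,4) by (intro add_mono sum_bounded_above) auto
  also have "\<dots> = real k * X + (real n - real k) * Y" using assms(2) by (simp add: of_nat_diff)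
  finally show ?thesis using assms(1) by (intro mult_left_mono) auto
qed

theorem lemma6:
  fixes ls lam \<alpha> c :: real and ntil :: "nat \<Rightarrow> nat"
  assumes "ls > 0" and "lam > 0" and "1 < \<alpha>" and "\<alpha> \<le> 2" and "c > 0"
    and "\<alpha> = 2 \<longrightarrow> c < 1/2"
    and "\<And>n. n \<ge> 2 \<Longrightarrow> real (ntil n) \<le> min (real (n choose 2)) (c * real n powr \<alpha>)"
  shows "\<exists>C'>0. \<exists>N. \<forall>n\<ge>N.
           avg_age n lam ls (gr_link n ((n choose 2) - ntil n)) \<le> C' * real n powr (\<alpha> - 1)"
proof (cases "\<alpha> = 2")
  case True
  have "avg_age n lam ls (gr_link n ((n choose 2) - ntil n)) \<le> ls / lam * real n powr (\<alpha> - 1)" if "n \<ge> 1" for n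
  proof -
    have "avg_age n lam ls (gr_link n ((n choose 2) - ntil n))
        \<le> (1 / real n) * (real 0 * 0 + (real n - real 0) * (real n * ls / lam))"
      unfolding avg_age_def using that assms(1,2)
      by (intro avg_split triv_bound) auto
    also have "\<dots> = ls / lam * real n powr (\<alpha> - 1)" using that True by simp
    finally show ?thesis .
  qed
  moreover have "ls / lam > 0" using assms by simp
  ultimately show ?thesis by blast
next
  case False
  define e where "e = \<alpha> - 1"
  have e0: "0 < e" and e1: "e < 1" using assms(3,4) False unfolding e_def by auto
  define L where "L = ls / lam"
  have L0: "L > 0" unfolding L_def using assms by simp
  define N where "N = max 8 (nat \<lceil>(8 * c) powr (1 / (1 - e))\<rceil>)"
  define C' where "C' = L * (4 + 2 / e + 2 * c)"
  have C'0: "C' > 0" unfolding C'_def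
  proof -
    have "2 / e > 0" using e0 by simp
    then have "4 + 2 / e + 2 * c > 0" using assms(5) by linarith
    then show "L * (4 + 2 / e + 2 * c) > 0" using L0 by simp
  qed
  have "avg_age n lam ls (gr_link n ((n choose 2) - ntil n)) \<le> C' * real n powr (\<alpha> - 1)" if nN: "n \<ge> N" for n
  proof -
    define x where "x = real n"
    define p where "p = x powr e"
    have n8: "n \<ge> 8" using nN unfolding N_def by simp
    then have x8: "x \<ge> 8" unfolding x_def by simp
    have p1: "p \<ge> 1" unfolding p_def using x8 e0 by (intro ge_one_powr_ge_zero) auto
    have hx: "x \<ge> (8 * c) powr (1 / (1 - e))"
    proof -
      have "(8 * c) powr (1 / (1 - e)) \<le> real (nat \<lceil>(8 * c) powr (1 / (1 - e))\<rceil>)" by (rule real_nat_ceiling_ge)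
      also have "\<dots> \<le> x"
      proof -
        have "nat \<lceil>(8 * c) powr (1 / (1 - e))\<rceil> \<le> n" using nN unfolding N_def by (rule max.boundedE)
        then show ?thesis unfolding x_def by (simp only: of_nat_le_iff)
      qed
      finally show ?thesis .
    qed
    have h1: "x powr (1 - e) \<ge> 8 * c"
    proof -
      have "((8 * c) powr (1 / (1 - e))) powr (1 - e) \<le> x powr (1 - e)"
        using hx e1 by (intro powr_mono2) auto
      moreover have "((8 * c) powr (1 / (1 - e))) powr (1 - e) = 8 * c"
        using e1 assms(5) by (simp add: powr_powr)
      ultimately show ?thesis by simp
    qed
    have h2: "p * x powr (1 - e) = x" unfolding p_def using x8 by (simp add: powr_add[symmetric])
    have h3: "x powr \<alpha> = x * p"
    proof -
      have "x powr \<alpha> = x powr (1 + e)" unfolding e_def by simp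
      also have "\<dots> = x powr 1 * x powr e" by (rule powr_add)
      finally show ?thesis unfolding p_def using x8 by simp
    qed
    have h4: "8 * c * p \<le> x"
    proof -
      have "8 * c * p \<le> x powr (1 - e) * p" using h1 p1 by (intro mult_right_mono) auto
      then show ?thesis using h2 by (simp add: mult.commute)
    qed
    define nb where "nb = (n choose 2) - ntil n"
    have nt: "real (ntil n) \<le> real (n choose 2)" "real (ntil n) \<le> c * (x * p)"
      using assms(7)[of n] n8 h3 unfolding x_def by auto
    then have ntn: "ntil n \<le> n choose 2" by simp
    have nbr: "real nb = real (n choose 2) - real (ntil n)" unfolding nb_def using ntn by (simp add: of_nat_diff)
    define k where "k = gr_k n nb"
    have kp: "1 \<le> k" "k \<le> n" "k choose 2 \<le> nb" "nb - (k choose 2) \<le> k - 1"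
      using gr_k_props[of n nb] n8 unfolding nb_def k_def by auto
    have nbk: "nb < (k choose 2) + k" using kp by arith
    define y where "y = real k"
    have y1: "y \<ge> 1" and yx: "y \<le> x" unfolding y_def x_def using kp by auto
    have cn: "2 * real (n choose 2) = x * (x - 1)"
    proof -
      have "real (2 * (n choose 2)) = real (n * (n - 1))" by (simp only: two_choose)
      then show ?thesis unfolding x_def using n8 by (simp add: of_nat_diff)
    qed
    have ck: "2 * real (k choose 2) = y * (y - 1)"
    proof -
      have "real (2 * (k choose 2)) = real (k * (k - 1))" by (simp only: two_choose)
      then show ?thesis unfolding y_def using kp by (simp add: of_nat_diff)
    qed
    have "real nb < real (k choose 2) + y" using nbk unfolding y_def by linarith
    then have F: "x * x - x - 2 * (c * (x * p)) < y * y + y"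
      using nbr cn ck nt(2) by (simp add: algebra_simps)
    have yy: "y * y \<le> x * y" using yx y1 by (intro mult_right_mono) auto
    have G0: "x * x - x * y < 2 * (c * (x * p)) + 2 * x" using F yy yx by linarith
    have G: "(x - y) * x < (2 * c * p + 2) * x" using G0 by (simp add: algebra_simps)
    then have G': "x - y < 2 * c * p + 2" using x8 by simp
    have xy: "x < 2 * y" using G' h4 x8 by linarith
    have lnb: "uu k 1 \<le> 1 + p / e"
    proof -
      have "uu k 1 \<le> 1 + ln y" unfolding y_def using uu1_le kp by simp
      also have "ln y \<le> ln x" using y1 yx by simp
      also have "ln x \<le> p / e" unfolding p_def using x8 e0 by (intro ln_powr_bound) auto
      finally show ?thesis by simp
    qed
    define X where "X = 2 * L * (1 + p / e)"
    have AX: "age_set {1..n} (unif_l0 n lam) (unif_l n lam (gr_link n nb)) ls {i} \<le> X" if "i \<in> {1..k}" for i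
    proof -
      have "age_set {1..n} (unif_l0 n lam) (unif_l n lam (gr_link n nb)) ls {i} \<le> real n * ls / lam * gg k 1"
      proof -
        have cl: "\<And>a b. a \<in> {1..k} \<Longrightarrow> b \<in> {1..k} \<Longrightarrow> a \<noteq> b \<Longrightarrow> gr_link n nb a b"
          unfolding k_def by (rule gr_clique)
        have "n > 0" using n8 by simp
        then show ?thesis using clique_bound[OF _ assms(2) assms(1) kp(1) kp(2) cl that] by simp
      qed
      also have "real n * ls / lam * gg k 1 = L * (x / y) * uu k 1"
        unfolding gg_def L_def x_def y_def by simp
      also have "\<dots> \<le> L * 2 * (1 + p / e)"
      proof (rule mult_mono)
        show "L * (x / y) \<le> L * 2" using L0 xy y1 by (intro mult_left_mono) (auto simp: divide_simps)
      qed (use lnb L0 x8 y1 uu_nonneg in auto)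
      finally show ?thesis unfolding X_def by (simp add: ac_simps)
    qed
    have AY: "age_set {1..n} (unif_l0 n lam) (unif_l n lam (gr_link n nb)) ls {i} \<le> x * L" if "i \<in> {Suc k..n}" for i
      using triv_bound[of n lam ls i] that n8 kp assms(1,2) unfolding x_def L_def by auto
    have "avg_age n lam ls (gr_link n nb) \<le> (1 / x) * (y * X + (x - y) * (x * L))"
      unfolding avg_age_def x_def y_def using n8 kp AX AY unfolding x_def by (intro avg_split) auto
    also have "\<dots> = (y / x) * X + (x - y) * L" using x8 by (simp add: field_simps)
    also have "\<dots> \<le> X + (2 * c * p + 2) * L"
    proof (intro add_mono mult_right_mono)
      have "X \<ge> 0" unfolding X_def using L0 p1 e0 by simp
      moreover have "y / x \<le> 1" using yx x8 by simp
      ultimately have "y / x * X \<le> 1 * X" by (intro mult_right_mono)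
      then show "y / x * X \<le> X" by simp
    qed (use G' L0 in auto)
    also have "\<dots> \<le> C' * p"
    proof -
      have "2 * L \<le> 2 * L * p" "2 * L \<le> 2 * L * p" using L0 p1 by simp_all
      then show ?thesis unfolding X_def C'_def using L0 e0 by (simp add: algebra_simps)
    qed
    finally show ?thesis unfolding nb_def p_def x_def e_def .
  qed
  then show ?thesis using C'0 by blast
qed

end
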